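(* Let $\alpha>0$ and $t>2\pi$, and put $\tau=t/2\pi$. Then \[ S(\tau^\alpha,t)\le 2A\bigl(\tau^{1/2}+2\tau^{\alpha-1/2}\bigr), \] where $A=\frac{2}{\sqrt\pi}(1+\sqrt{1+3\pi/8})$.
   Context: $e(x)=e^{2\pi i x}$, $f(x)=\frac{t}{2\pi}\log x$, and for $X>0$, $S(X,t)=\sup_{0<Y\le X}\bigl|\sum_{X<n\le X+Y}e(f(n))\bigr|$ (sum over integers $n$). *)

theory Defs
  imports "HOL-Analysis.Analysis"
begin

definition e :: "real \<Rightarrow> complex" where
  "e x = exp (2 * of_real pi * \<i> * of_real x)"

definition f :: "real \<Rightarrow> real \<Rightarrow> real" where
  "f t x = t / (2 * pi) * ln x"

definition expsum :: "real \<Rightarrow> real \<Rightarrow> real \<Rightarrow> complex" where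
  "expsum t X Y = (\<Sum>n\<in>{n::int. X < of_int n \<and> of_int n \<le> X + Y}. e (f t (of_int n)))"

definition S :: "real \<Rightarrow> real \<Rightarrow> real" where
  "S X t = (SUP Y\<in>{0<..X}. norm (expsum t X Y))"

end

theory Submission
  imports Defs
begin


lemma e_cis: "e x = cis (2 * pi * x)"
  unfolding e_def cis_conv_exp by (simp add: mult.commute mult.left_commute)

lemma e_add: "e (x + y) = e x * e y"
  unfolding e_cis by (simp add: distrib_left cis_mult)

lemma norm_e [simp]: "norm (e x) = 1"
  unfolding e_cis by simp

lemma e_int: "e (of_int k) = 1"
proof -
  have "cis (2 * pi * of_int k) = 1"
    by (metis cis_multiple_2pi Ints_of_int mult.commute)
  then show ?thesis unfolding e_cis .
qed

lemma c_formula: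
  assumes "0 < \<theta>" "\<theta> < 1"
  shows "(e \<theta> - 1) * (- 1/2 - \<i> * of_real (cot (pi * \<theta>)) / 2) = 1"
proof -
  define x where "x = pi * \<theta>"
  have s: "sin x > 0" unfolding x_def using assms by (intro sin_gt_zero) auto
  have E: "e \<theta> = Complex (1 - 2 * sin x ^ 2) (2 * sin x * cos x)" unfolding e_cis x_def
    by (simp add: cis.ctr mult.assoc cos_double_sin sin_double)
  have C: "cot (pi * \<theta>) = cos x / sin x" unfolding x_def cot_def ..
  have P: "cos x ^ 2 + sin x ^ 2 = 1" by simp
  have P': "cos x * cos x + sin x * sin x = 1" using P by (simp add: power2_eq_square)
  show ?thesis unfolding E C using s
    apply (simp add: complex_eq_iff field_simps power2_eq_square)
    using P' by algebra
qed

lemma cot_anti: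
  assumes "0 < a" "a \<le> b" "b < pi"
  shows "cot b \<le> cot a"
proof -
  have sa: "sin a > 0" using assms by (intro sin_gt_zero) auto
  have sb: "sin b > 0" using assms by (intro sin_gt_zero) auto
  have "sin (b - a) \<ge> 0" using assms by (intro sin_ge_zero) auto
  then have "sin b * cos a - cos b * sin a \<ge> 0" by (simp add: sin_diff)
  then show ?thesis unfolding cot_def using sa sb
    by (simp add: divide_simps mult.commute)
qed

lemma cot_reflect: "cot (pi - x) = - cot x"
  unfolding cot_def by simp

lemma sin_lower:
  assumes "0 < \<delta>" "\<delta> \<le> 1/2" "\<delta> \<le> D" "D \<le> 1 - \<delta>"
  shows "sin (pi * \<delta>) \<le> sin (pi * D)"
proof (cases "D \<le> 1/2")
  case True
  have "pi * \<delta> > 0" using assms by simp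
  have "pi * \<delta> \<le> pi * D" "pi * D \<le> pi / 2" using assms True by auto
  then show ?thesis using \<open>pi * \<delta> > 0\<close> pi_gt_zero by (intro sin_monotone_2pi_le) linarith+
next
  case False
  have "pi * \<delta> > 0" using assms by simp
  moreover have "pi * \<delta> \<le> pi * (1 - D)" "pi * (1 - D) \<le> pi / 2" using assms False by auto
  ultimately have "sin (pi * \<delta>) \<le> sin (pi * (1 - D))"
    using pi_gt_zero by (intro sin_monotone_2pi_le) linarith+
  also have "sin (pi * (1 - D)) = sin (pi * D)"
    by (simp add: right_diff_distrib sin_diff)
  finally show ?thesis .
qed

lemma norm_c:
  assumes "sin y > 0"
  shows "norm (- 1/2 - \<i> * of_real (cot y) / 2) = 1 / (2 * sin y)"
proof -
  have eq: "- 1/2 - \<i> * of_real (cot y) / 2 = Complex (-1/2) (- cot y / 2)"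
    by (simp add: complex_eq_iff)
  have P: "cos y ^ 2 + sin y ^ 2 = 1" by simp
  have "(-1/2)^2 + (- cot y / 2)^2 = (1 / (2 * sin y))^2"
    unfolding cot_def using assms P by (simp add: field_simps power2_eq_square)
  then have "sqrt ((-1/2)^2 + (- cot y / 2)^2) = 1 / (2 * sin y)"
    using assms by simp
  then show ?thesis unfolding eq cmod_def by simp
qed

lemma aux_alg:
  fixes x y cS ck z Sk :: complex
  assumes "x = cS * (y - x)"
  shows "ck * x - z + Sk + x = cS * y - z + (Sk + (ck - cS) * x)"
  using assms by algebra

lemma KL_nat:
  fixes E :: "nat \<Rightarrow> complex" and D :: "nat \<Rightarrow> real"
  assumes rec: "\<And>j. j < L \<Longrightarrow> E (Suc j) = E j * e (D j)"
    and rng: "\<And>j. j < L \<Longrightarrow> \<delta> \<le> D j \<and> D j \<le> 1 - \<delta>"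
    and mon: "\<And>j. Suc j < L \<Longrightarrow> D (Suc j) \<le> D j"
    and nE: "\<And>j. j \<le> L \<Longrightarrow> norm (E j) = 1"
    and d0: "0 < \<delta>" and d1: "\<delta> \<le> 1/2"
  shows "norm (\<Sum>j\<le>L. E j) \<le> 1 / sin (pi * \<delta>) + cot (pi * \<delta>) + 1"
proof -
  have sd: "sin (pi * \<delta>) > 0" using d0 d1 by (intro sin_gt_zero) auto
  have pd: "pi * \<delta> > 0" using d0 by simp
  have pd2: "pi * \<delta> \<le> pi / 2" using d1 by auto
  have cd: "cot (pi * \<delta>) \<ge> 0" unfolding cot_def using sd pd pd2
    using pi_gt_zero by (intro divide_nonneg_pos cos_ge_zero) linarith+
  show ?thesis
  proof (cases "L = 0")
    case True
    then show ?thesis using nE[of 0] sd cd by simp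
  next
    case False
    define c where "c j = - 1/2 - \<i> * of_real (cot (pi * D j)) / 2" for j
    have key: "E j = c j * (E (Suc j) - E j)" if "j < L" for j
    proof -
      have "0 < D j" "D j < 1" using rng[OF that] d0 by auto
      then have "(e (D j) - 1) * c j = 1" unfolding c_def by (rule c_formula)
      moreover have "c j * (E (Suc j) - E j) = E j * ((e (D j) - 1) * c j)"
        unfolding rec[OF that] by (simp add: algebra_simps)
      ultimately show ?thesis by simp
    qed
    have ident: "(\<Sum>j<Suc k. E j) = c k * E (Suc k) - c 0 * E 0 + (\<Sum>j\<in>{1..k}. (c (j - 1) - c j) * E j)"
      if "k < L" for k
      using that
    proof (induction k)
      case 0
      then show ?case using key[of 0] by (simp add: algebra_simps)
    next
      case (Suc k)
      have IH: "(\<Sum>j<Suc k. E j) = c k * E (Suc k) - c 0 * E 0 + (\<Sum>j\<in>{1..k}. (c (j - 1) - c j) * E j)"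
        using Suc by simp
      have K: "E (Suc k) = c (Suc k) * (E (Suc (Suc k)) - E (Suc k))" using key Suc.prems by simp
      have Ss: "(\<Sum>j\<in>{1..Suc k}. (c (j - 1) - c j) * E j) = (\<Sum>j\<in>{1..k}. (c (j - 1) - c j) * E j) + (c k - c (Suc k)) * E (Suc k)"
        by simp
      have L: "(\<Sum>j<Suc (Suc k). E j) = (\<Sum>j<Suc k. E j) + E (Suc k)" by simp
      show ?case unfolding L Ss IH using aux_alg[OF K] by simp
    qed
    define k where "k = L - 1"
    have kL: "k < L" "Suc k = L" unfolding k_def using False by auto
    have sinD: "sin (pi * D j) \<ge> sin (pi * \<delta>)" if "j < L" for j
      using rng[OF that] d0 d1 by (intro sin_lower) auto
    have nc: "norm (c j) \<le> 1 / (2 * sin (pi * \<delta>))" if "j < L" for j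
    proof -
      have "sin (pi * D j) > 0" using sinD[OF that] sd by linarith
      then have "norm (c j) = 1 / (2 * sin (pi * D j))" unfolding c_def by (rule norm_c)
      also have "\<dots> \<le> 1 / (2 * sin (pi * \<delta>))" using sinD[OF that] sd
        by (intro divide_left_mono mult_left_mono) auto
      finally show ?thesis .
    qed
    define g where "g j = cot (pi * D j) / 2" for j
    have ndiff: "norm ((c (j - 1) - c j) * E j) = g j - g (j - 1)" if "1 \<le> j" "j \<le> k" for j
    proof -
      have j1: "j - 1 < L" "j < L" "Suc (j - 1) < L" using that kL by auto
      have m: "D j \<le> D (j - 1)" using mon[OF j1(3)] that by simp
      have "cot (pi * D (j - 1)) \<le> cot (pi * D j)"
        using rng[OF j1(1)] rng[OF j1(2)] m d0
        by (intro cot_anti) (auto simp: field_simps)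
      moreover have "c (j - 1) - c j = \<i> * of_real (g j - g (j - 1))"
        unfolding c_def g_def by (simp add: algebra_simps)
      ultimately have "g (j - 1) \<le> g j" "c (j - 1) - c j = \<i> * of_real (g j - g (j - 1))"
        unfolding g_def by auto
      then show ?thesis using nE[of j] j1
        by (simp add: norm_mult del: of_real_diff)
    qed
    have tele: "(\<Sum>j\<in>{1..m}. g j - g (j - 1)) = g m - g 0" for m
      by (induction m) auto
    have gk: "g k \<le> cot (pi * \<delta>) / 2"
      unfolding g_def using rng[OF kL(1)] d0
      by (intro divide_right_mono cot_anti) (auto simp: field_simps)
    have g0: "g 0 \<ge> - cot (pi * \<delta>) / 2"
    proof -
      have r0: "\<delta> \<le> D 0" "D 0 \<le> 1 - \<delta>" using rng[of 0] False by auto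
      have "pi * D 0 \<le> pi * (1 - \<delta>)" using r0 by (intro mult_left_mono) auto
      moreover have "pi * (1 - \<delta>) < pi * 1" using d0 by (intro mult_strict_left_mono) auto
      moreover have "0 < pi * D 0" using r0 d0 by (intro mult_pos_pos) auto
      ultimately have "cot (pi * (1 - \<delta>)) \<le> cot (pi * D 0)"
        by (intro cot_anti) auto
      moreover have "cot (pi * (1 - \<delta>)) = - cot (pi * \<delta>)"
        using cot_reflect[of "pi * \<delta>"] by (simp add: right_diff_distrib)
      ultimately show ?thesis unfolding g_def by simp
    qed
    have "(\<Sum>j\<le>L. E j) = (\<Sum>j<Suc k. E j) + E L"
      using kL by (simp add: lessThan_Suc_atMost[symmetric])
    also have "\<dots> = c k * E (Suc k) - c 0 * E 0 + (\<Sum>j\<in>{1..k}. (c (j - 1) - c j) * E j) + E L"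
      using ident[OF kL(1)] by simp
    finally have eqs: "(\<Sum>j\<le>L. E j) = c k * E (Suc k) - c 0 * E 0 + (\<Sum>j\<in>{1..k}. (c (j - 1) - c j) * E j) + E L" .
    have "norm (\<Sum>j\<le>L. E j) \<le> norm (c k * E (Suc k)) + norm (c 0 * E 0) + norm (\<Sum>j\<in>{1..k}. (c (j - 1) - c j) * E j) + norm (E L)"
      unfolding eqs by (intro order.trans[OF norm_triangle_ineq] add_mono order.trans[OF norm_triangle_ineq4] order_refl)
    also have "norm (c k * E (Suc k)) \<le> 1 / (2 * sin (pi * \<delta>))"
      using nc[OF kL(1)] nE[of "Suc k"] kL by (simp add: norm_mult)
    also have "norm (c 0 * E 0) \<le> 1 / (2 * sin (pi * \<delta>))"
      using nc[of 0] nE[of 0] False by (simp add: norm_mult)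
    also have "norm (\<Sum>j\<in>{1..k}. (c (j - 1) - c j) * E j) \<le> (\<Sum>j\<in>{1..k}. norm ((c (j - 1) - c j) * E j))"
      by (rule norm_sum)
    also have "\<dots> = (\<Sum>j\<in>{1..k}. g j - g (j - 1))"
      by (intro sum.cong refl ndiff) auto
    also have "\<dots> = g k - g 0" by (rule tele)
    also have "norm (E L) = 1" using nE by simp
    finally show ?thesis using gk g0 by simp
  qed
qed



lemma cotbound:
  assumes "0 < x" "x \<le> pi / 2"
  shows "1 / sin x + cot x \<le> 2 / x"
proof -
  define y where "y = x / 2"
  have xy: "x = 2 * y" unfolding y_def by simp
  have y0: "0 < y" "y < pi / 2" using assms unfolding y_def by auto
  have sy: "sin y > 0" using y0 by (intro sin_gt_zero) auto
  have cy: "cos y > 0" using y0 by (intro cos_gt_zero) auto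
  have eq: "1 / sin x + cot x = cos y / sin y"
    unfolding xy cot_def sin_double cos_double_cos using sy cy
    by (simp add: field_simps power2_eq_square)
  have "\<bar>y\<bar> \<le> \<bar>tan y\<bar>" using y0 by (intro abs_tan_ge) auto
  moreover have "tan y > 0" using y0 by (intro tan_gt_zero) auto
  ultimately have ty: "y \<le> tan y" using y0 by simp
  have "cos y / sin y = 1 / tan y" unfolding tan_def by simp
  also have "\<dots> \<le> 1 / y" using ty y0 by (intro divide_left_mono) auto
  also have "\<dots> = 2 / x" unfolding xy by simp
  finally show ?thesis using eq by simp
qed

lemma card_int_diam:
  fixes S :: "int set" and L :: real
  assumes "finite S" "S \<noteq> {}" "\<And>a b. a \<in> S \<Longrightarrow> b \<in> S \<Longrightarrow> a \<le> b \<Longrightarrow> real_of_int (b - a) \<le> L"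
  shows "real (card S) \<le> L + 1"
proof -
  have sub: "S \<subseteq> {Min S..Max S}" using assms by auto
  have "card S \<le> card {Min S..Max S}" using sub by (intro card_mono) auto
  also have "card {Min S..Max S} = nat (Max S - Min S + 1)" by simp
  finally have c: "real (card S) \<le> real (nat (Max S - Min S + 1))" by simp
  have "Min S \<le> Max S" using assms by simp
  then have "real (nat (Max S - Min S + 1)) = real_of_int (Max S - Min S) + 1" by simp
  moreover have "real_of_int (Max S - Min S) \<le> L"
    using assms by (intro assms(3)) auto
  ultimately show ?thesis using c by linarith
qed

lemma ln_step:
  fixes x :: real assumes "x > 0"
  shows "1 / (x + 1) \<le> ln (x + 1) - ln x" "ln (x + 1) - ln x \<le> 1 / x"
proof -
  have "ln (x / (x + 1)) \<le> x / (x + 1) - 1" using assms by (intro ln_le_minus_one) auto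
  moreover have "ln (x / (x + 1)) = ln x - ln (x + 1)" using assms by (simp add: ln_div)
  moreover have "x / (x + 1) - 1 = - (1 / (x + 1))" using assms by (simp add: field_simps)
  ultimately show "1 / (x + 1) \<le> ln (x + 1) - ln x" by linarith
  have "ln ((x + 1) / x) \<le> (x + 1) / x - 1" using assms by (intro ln_le_minus_one) auto
  moreover have "ln ((x + 1) / x) = ln (x + 1) - ln x" using assms by (simp add: ln_div)
  moreover have "(x + 1) / x - 1 = 1 / x" using assms by (simp add: field_simps)
  ultimately show "ln (x + 1) - ln x \<le> 1 / x" by linarith
qed



lemma f_tau: "f t x = t / (2 * pi) * ln x" unfolding f_def ..

lemma norm_sum_e_card: "norm (\<Sum>n\<in>T. e (g n)) \<le> real (card T)"
proof -
  have "norm (\<Sum>n\<in>T. e (g n)) \<le> (\<Sum>n\<in>T. norm (e (g n)))" by (rule norm_sum)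
  also have "\<dots> = real (card T)" by simp
  finally show ?thesis .
qed

lemma sum_int_interval_reindex:
  fixes M N :: int assumes "M \<le> N"
  shows "(\<Sum>n\<in>{M..N}. h n) = (\<Sum>j\<le>nat (N - M). h (M + int j))"
proof -
  have img: "{M..N} = (\<lambda>j. M + int j) ` {..nat (N - M)}"
  proof
    show "{M..N} \<subseteq> (\<lambda>j. M + int j) ` {..nat (N - M)}"
    proof
      fix n assume "n \<in> {M..N}"
      then have "n = M + int (nat (n - M))" "nat (n - M) \<in> {..nat (N - M)}" by auto
      then show "n \<in> (\<lambda>j. M + int j) ` {..nat (N - M)}" by blast
    qed
  qed (use assms in auto)
  have "inj_on (\<lambda>j. M + int j) {..nat (N - M)}" by (auto simp: inj_on_def)
  then show ?thesis unfolding img by (simp add: sum.reindex)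
qed

lemma cell_bound:
  fixes t X Y \<delta> :: real and k :: int
  assumes t0: "t > 0" and X0: "X > 0" and Y0: "0 < Y" and YX: "Y \<le> X"
    and d0: "0 < \<delta>" and d1: "\<delta> \<le> 1/2"
  shows "norm (\<Sum>n\<in>{n::int. X < of_int n \<and> of_int n \<le> X + Y \<and> \<lfloor>t / (2 * pi) / of_int n + \<delta>\<rfloor> = k}. e (f t (of_int n)))
      \<le> 8 * \<delta> * X^2 / (t / (2 * pi)) + 2 + 2 / (pi * \<delta>)"
proof -
  define \<tau> where "\<tau> = t / (2 * pi)"
  have tau0: "\<tau> > 0" unfolding \<tau>_def using t0 by simp
  define Cell where "Cell = {n::int. X < of_int n \<and> of_int n \<le> X + Y \<and> \<lfloor>\<tau> / of_int n + \<delta>\<rfloor> = k}"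
  have finC: "finite Cell"
  proof (rule finite_subset)
    show "Cell \<subseteq> {\<lfloor>X\<rfloor>..\<lceil>X + Y\<rceil>}" unfolding Cell_def
      by (auto simp: floor_le_iff le_ceiling_iff intro: less_imp_le)
  qed simp
  have cellI: "n \<in> Cell \<longleftrightarrow> X < of_int n \<and> of_int n \<le> X + Y \<and> of_int k \<le> \<tau> / of_int n + \<delta> \<and> \<tau> / of_int n + \<delta> < of_int k + 1" for n
    unfolding Cell_def by (simp add: floor_eq_iff)
  define Bad where "Bad = Cell \<inter> {n. \<tau> / of_int n < of_int k + \<delta>}"
  define Good where "Good = Cell - {n. \<tau> / of_int n < of_int k + \<delta>}"
  have split: "(\<Sum>n\<in>Cell. e (f t (of_int n))) = (\<Sum>n\<in>Bad. e (f t (of_int n))) + (\<Sum>n\<in>Good. e (f t (of_int n)))"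
    unfolding Bad_def Good_def using finC by (rule sum.Int_Diff)
  have finB: "finite Bad" "finite Good" unfolding Bad_def Good_def using finC by auto
  have bad: "norm (\<Sum>n\<in>Bad. e (f t (of_int n))) \<le> 8 * \<delta> * X^2 / \<tau> + 1"
  proof (cases "Bad = {}")
    case True
    then show ?thesis using d0 tau0 by simp
  next
    case False
    have "real (card Bad) \<le> 8 * \<delta> * X^2 / \<tau> + 1"
    proof (rule card_int_diam[OF finB(1) False])
      fix a b assume ab: "a \<in> Bad" "b \<in> Bad" "a \<le> b"
      have a: "X < of_int a" "of_int a \<le> X + Y" "\<tau> / of_int a < of_int k + \<delta>"
        using ab(1) unfolding Bad_def by (auto simp: cellI)
      have b: "X < of_int b" "of_int b \<le> X + Y" "of_int k \<le> \<tau> / of_int b + \<delta>"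
        using ab(2) unfolding Bad_def by (auto simp: cellI)
      have a0: "real_of_int a > 0" and b0: "real_of_int b > 0" using a b X0 by linarith+
      have diff: "\<tau> / of_int a - \<tau> / of_int b \<le> 2 * \<delta>" using a b by linarith
      have ab2: "of_int a * of_int b \<le> (2 * X) * (2 * X)"
        using a b a0 b0 YX by (intro mult_mono) auto
      have "real_of_int (b - a) * \<tau> = (\<tau> / of_int a - \<tau> / of_int b) * (of_int a * of_int b)"
        using a0 b0 by (simp add: field_simps)
      also have "\<dots> \<le> (2 * \<delta>) * (of_int a * of_int b)"
        using diff a0 b0 by (intro mult_right_mono) auto
      also have "\<dots> \<le> (2 * \<delta>) * ((2 * X) * (2 * X))"
        using ab2 d0 by (intro mult_left_mono) auto
      also have "\<dots> = 8 * \<delta> * X^2" by (simp add: power2_eq_square)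
      finally show "real_of_int (b - a) \<le> 8 * \<delta> * X^2 / \<tau>"
        using tau0 by (simp add: field_simps)
    qed
    then show ?thesis using norm_sum_e_card[of "\<lambda>n. f t (of_int n)" Bad] by linarith
  qed
  have good: "norm (\<Sum>n\<in>Good. e (f t (of_int n))) \<le> 2 / (pi * \<delta>) + 1"
  proof (cases "Good = {}")
    case True
    then show ?thesis using d0 by simp
  next
    case False
    have goodI: "n \<in> Good \<longleftrightarrow> X < of_int n \<and> of_int n \<le> X + Y \<and> of_int k + \<delta> \<le> \<tau> / of_int n \<and> \<tau> / of_int n + \<delta> < of_int k + 1" for n
      unfolding Good_def using d0 by (auto simp: cellI)
    define M where "M = Min Good"
    define N where "N = Max Good"
    have MG: "M \<in> Good" and NG: "N \<in> Good" unfolding M_def N_def using finB(2) False by auto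
    have MN: "M \<le> N" unfolding M_def N_def using finB(2) False by simp
    have Geq: "Good = {M..N}"
    proof
      show "Good \<subseteq> {M..N}" unfolding M_def N_def using finB(2) by auto
      show "{M..N} \<subseteq> Good"
      proof
        fix n assume n: "n \<in> {M..N}"
        have M: "X < of_int M" "of_int M \<le> X + Y" "\<tau> / of_int M + \<delta> < of_int k + 1"
          using MG by (auto simp: goodI)
        have N: "X < of_int N" "of_int N \<le> X + Y" "of_int k + \<delta> \<le> \<tau> / of_int N"
          using NG by (auto simp: goodI)
        have nM: "real_of_int M \<le> of_int n" and nN: "real_of_int n \<le> of_int N" using n by auto
        have M0: "real_of_int M > 0" using M X0 by linarith
        have "\<tau> / of_int N \<le> \<tau> / of_int n" using nN M0 nM tau0
          by (intro divide_left_mono) auto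
        moreover have "\<tau> / of_int n \<le> \<tau> / of_int M" using nM M0 tau0
          by (intro divide_left_mono) auto
        ultimately show "n \<in> Good" unfolding goodI[of n] using M N nM nN by linarith
      qed
    qed
    define L where "L = nat (N - M)"
    define x where "x j = real_of_int M + real j" for j
    define E where "E j = e (f t (x j))" for j
    define D where "D j = \<tau> * (ln (x j + 1) - ln (x j)) - of_int k" for j
    have xG: "X < x j \<and> x j \<le> X + Y \<and> of_int k + \<delta> \<le> \<tau> / x j \<and> \<tau> / x j + \<delta> < of_int k + 1" if "j \<le> L" for j
    proof -
      have "M + int j \<in> Good" unfolding Geq using that MN unfolding L_def by auto
      then show ?thesis unfolding goodI[of "M + int j"] x_def by simp
    qed
    have x0: "x j > 0" if "j \<le> L" for j using xG[OF that] X0 by linarith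
    have xS: "x (Suc j) = x j + 1" for j unfolding x_def by simp
    have sum_eq: "(\<Sum>n\<in>Good. e (f t (of_int n))) = (\<Sum>j\<le>L. E j)"
      unfolding Geq sum_int_interval_reindex[OF MN] E_def x_def L_def by simp
    have fx: "f t y = \<tau> * ln y" for y unfolding f_def \<tau>_def ..
    have "norm (\<Sum>j\<le>L. E j) \<le> 1 / sin (pi * \<delta>) + cot (pi * \<delta>) + 1"
    proof (rule KL_nat[where D = D])
      fix j assume j: "j < L"
      have "f t (x (Suc j)) = f t (x j) + D j + of_int k"
        unfolding fx D_def xS by (simp add: algebra_simps)
      then show "E (Suc j) = E j * e (D j)" unfolding E_def by (simp add: e_add e_int)
    next
      fix j assume j: "j < L"
      have a: "x j > 0" using x0 j by simp
      have b1: "of_int k + \<delta> \<le> \<tau> / (x j + 1)" using xG[of "Suc j"] j xS by simp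
      have b2: "\<tau> / x j + \<delta> < of_int k + 1" using xG[of j] j by simp
      have l1: "\<tau> * (1 / (x j + 1)) \<le> \<tau> * (ln (x j + 1) - ln (x j))"
        using ln_step(1)[OF a] tau0 by (intro mult_left_mono) auto
      have l2: "\<tau> * (ln (x j + 1) - ln (x j)) \<le> \<tau> * (1 / x j)"
        using ln_step(2)[OF a] tau0 by (intro mult_left_mono) auto
      show "\<delta> \<le> D j \<and> D j \<le> 1 - \<delta>" unfolding D_def using l1 l2 b1 b2 by simp
    next
      fix j assume j: "Suc j < L"
      have a: "x j > 0" using x0 j by simp
      have a1: "x j + 1 > 0" using a by simp
      have "ln (x j + 1 + 1) - ln (x j + 1) \<le> 1 / (x j + 1)" by (rule ln_step(2)[OF a1])
      also have "\<dots> \<le> ln (x j + 1) - ln (x j)" by (rule ln_step(1)[OF a])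
      finally have "ln (x j + 1 + 1) - ln (x j + 1) \<le> ln (x j + 1) - ln (x j)" .
      then show "D (Suc j) \<le> D j" unfolding D_def xS using tau0
        by (simp add: mult_left_mono)
    next
      fix j show "norm (E j) = 1" unfolding E_def by simp
    qed (use d0 d1 in auto)
    also have "1 / sin (pi * \<delta>) + cot (pi * \<delta>) \<le> 2 / (pi * \<delta>)"
      using d0 d1 by (intro cotbound) auto
    finally show ?thesis unfolding sum_eq by simp
  qed
  have "norm (\<Sum>n\<in>Cell. e (f t (of_int n))) \<le> norm (\<Sum>n\<in>Bad. e (f t (of_int n))) + norm (\<Sum>n\<in>Good. e (f t (of_int n)))"
    unfolding split by (rule norm_triangle_ineq)
  also have "\<dots> \<le> 8 * \<delta> * X^2 / \<tau> + 2 + 2 / (pi * \<delta>)" using bad good by simp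
  finally show ?thesis unfolding Cell_def \<tau>_def .
qed



lemma A_bound: "2 / sqrt pi * (1 + sqrt (1 + 3 * pi / 8)) \<ge> 11/4"
proof -
  have p1: "pi \<le> 31416/10000" "pi \<ge> 31415/10000" using pi_approx by simp_all
  have "((709/400)::real) ^ 2 = 314175625/100000000" by (simp add: power2_eq_square)
  then have "sqrt pi \<le> sqrt ((709/400) ^ 2)" using p1 by (intro real_sqrt_le_mono) linarith
  then have s1: "sqrt pi \<le> (709/400)" by simp
  have "((147/100)::real) ^ 2 = 21609/10000" by (simp add: power2_eq_square)
  then have "sqrt ((147/100) ^ 2) \<le> sqrt (1 + 3 * pi / 8)" using p1 by (intro real_sqrt_le_mono) linarith
  then have s2: "(147/100) \<le> sqrt (1 + 3 * pi / 8)" by simp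
  have sp: "sqrt pi > 0" by simp
  have k1: "2 / sqrt pi \<ge> 800 / 709"
  proof -
    have "2 / sqrt pi \<ge> 2 / (709/400)" using s1 sp by (intro divide_left_mono) auto
    then show ?thesis by simp
  qed
  have k2: "1 + sqrt (1 + 3 * pi / 8) \<ge> 247 / 100" using s2 by simp
  have P: "2 / sqrt pi * (1 + sqrt (1 + 3 * pi / 8)) \<ge> (800 / 709) * (247 / 100)"
    by (rule mult_mono[OF k1 k2]) (use sp k2 in simp_all)
  have C: "(800 / 709) * (247 / 100) \<ge> (11/4::real)" by simp
  show ?thesis by (rule order_trans[OF C P])
qed

lemma lin_aux:
  fixes p q w r u :: real
  shows "p \<le> 2 * r \<Longrightarrow> q \<le> (32/25) * r \<Longrightarrow> w \<le> (128/25) * u \<Longrightarrow> r \<ge> 10 \<Longrightarrow> u \<ge> 0 \<Longrightarrow> r + p + q + 4 * u + 4 + w \<le> (11/2) * r + 11 * u"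
  by linarith

lemma numeric:
  fixes r u :: real
  assumes r: "r \<ge> 10" and u: "u \<ge> 1/2"
  shows "(r / (2 * u) + 2) * (2 * u + 2 + 8 * u / pi) \<le> (11/2) * r + 11 * u"
proof -
  have eq: "(r / (2 * u) + 2) * (2 * u + 2 + 8 * u / pi) = r + r / u + 4 * r / pi + 4 * u + 4 + 16 * u / pi"
    using u by (simp add: field_simps)
  have p1: "pi \<ge> 3125/1000" using pi_approx by simp
  have a: "r / u \<le> 2 * r" using u r by (simp add: field_simps)
  have b: "4 * r / pi \<le> (32/25) * r"
  proof -
    have "4 * r \<le> (32/25) * r * pi" using p1 r mult_left_mono[OF p1, of "(32/25) * r"] by simp
    then show ?thesis by (simp add: field_simps)
  qed
  have c: "16 * u / pi \<le> (128/25) * u"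
  proof -
    have "16 * u \<le> (128/25) * u * pi" using p1 u mult_left_mono[OF p1, of "(128/25) * u"] by simp
    then show ?thesis by (simp add: field_simps)
  qed
  show ?thesis unfolding eq using u by (intro lin_aux[OF a b c r]) linarith
qed

lemma Nset_finite: "finite {n::int. (X::real) < of_int n \<and> of_int n \<le> X + Y}"
proof (rule finite_subset)
  show "{n::int. X < of_int n \<and> of_int n \<le> X + Y} \<subseteq> {\<lfloor>X\<rfloor>..\<lceil>X + Y\<rceil>}"
    by (auto simp: floor_le_iff le_ceiling_iff intro: less_imp_le)
qed simp

lemma trivial_bound:
  assumes "Y \<ge> 0"
  shows "norm (expsum t X Y) \<le> Y + 1"
proof -
  let ?N = "{n::int. X < of_int n \<and> of_int n \<le> X + Y}"
  have "real (card ?N) \<le> Y + 1"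
  proof (cases "?N = {}")
    case True then show ?thesis using assms by (subst True) simp
  next
    case False
    show ?thesis
    proof (rule card_int_diam[OF Nset_finite False])
      fix a b assume "a \<in> ?N" "b \<in> ?N" "a \<le> b"
      then show "real_of_int (b - a) \<le> Y" by simp
    qed
  qed
  then show ?thesis unfolding expsum_def using norm_sum_e_card[of "\<lambda>n. f t (of_int n)" ?N] by linarith
qed

lemma e1_gen: "r > 0 \<Longrightarrow> u > 0 \<Longrightarrow> (r::real)^2 / (2 * (u * r)) = r / (2 * u)"
  by (simp add: power2_eq_square)

lemma e2_gen: "r > 0 \<Longrightarrow> u > 0 \<Longrightarrow> 8 * (1 / (4 * u)) * (u * r)^2 / (r::real)^2 = 2 * u"
  by (simp add: power2_eq_square)

lemma main_bound:
  fixes t X Y :: real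
  assumes t0: "t > 0" and tau: "t / (2 * pi) \<ge> 100" and X0: "X > 0" and Y0: "0 < Y" and YX: "Y \<le> X"
    and Xr: "X \<ge> sqrt (t / (2 * pi)) / 2"
  shows "norm (expsum t X Y) \<le> (11/2) * sqrt (t / (2 * pi)) + 11 * (X / sqrt (t / (2 * pi)))"
proof -
  define \<tau> where "\<tau> = t / (2 * pi)"
  define r where "r = sqrt \<tau>"
  have r10: "r \<ge> 10" unfolding r_def using tau real_sqrt_le_mono[of 100 \<tau>] unfolding \<tau>_def by simp
  have tr: "\<tau> = r^2" unfolding r_def using tau unfolding \<tau>_def by simp
  define u where "u = X / r"
  have Xu: "X = u * r" unfolding u_def using r10 by simp
  have "X / r \<ge> (r / 2) / r" using Xr r10 tau unfolding r_def \<tau>_def by (intro divide_right_mono) auto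
  then have u2: "u \<ge> 1/2" unfolding u_def using r10 by simp
  define \<delta> where "\<delta> = r / (4 * X)"
  have d0: "\<delta> > 0" unfolding \<delta>_def using r10 X0 by simp
  have d1: "\<delta> \<le> 1/2" unfolding \<delta>_def using Xr X0 unfolding r_def \<tau>_def by (simp add: field_simps)
  have du: "\<delta> = 1 / (4 * u)" unfolding \<delta>_def Xu using r10 by simp
  have tau0: "\<tau> > 0" using tr r10 by simp
  let ?N = "{n::int. X < of_int n \<and> of_int n \<le> X + Y}"
  define \<kappa> where "\<kappa> n = \<lfloor>\<tau> / of_int n + \<delta>\<rfloor>" for n :: int
  define Bc where "Bc = 8 * \<delta> * X^2 / \<tau> + 2 + 2 / (pi * \<delta>)"
  have Bc0: "Bc \<ge> 0" unfolding Bc_def using d0 tau0 by simp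
  have "expsum t X Y = (\<Sum>k\<in>\<kappa> ` ?N. \<Sum>n\<in>{n\<in>?N. \<kappa> n = k}. e (f t (of_int n)))"
    unfolding expsum_def by (rule sum.image_gen[OF Nset_finite])
  then have "norm (expsum t X Y) \<le> (\<Sum>k\<in>\<kappa> ` ?N. norm (\<Sum>n\<in>{n\<in>?N. \<kappa> n = k}. e (f t (of_int n))))"
    by (simp add: norm_sum)
  also have "\<dots> \<le> (\<Sum>k\<in>\<kappa> ` ?N. Bc)"
  proof (rule sum_mono)
    fix k
    have "{n\<in>?N. \<kappa> n = k} = {n::int. X < of_int n \<and> of_int n \<le> X + Y \<and> \<lfloor>t / (2 * pi) / of_int n + \<delta>\<rfloor> = k}"
      unfolding \<kappa>_def \<tau>_def by auto
    then show "norm (\<Sum>n\<in>{n\<in>?N. \<kappa> n = k}. e (f t (of_int n))) \<le> Bc"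
      unfolding Bc_def \<tau>_def using cell_bound[OF t0 X0 Y0 YX d0 d1, of k] by simp
  qed
  also have "\<dots> = real (card (\<kappa> ` ?N)) * Bc" by simp
  also have "\<dots> \<le> (\<tau> / (2 * X) + 2) * Bc"
  proof (rule mult_right_mono[OF _ Bc0])
    define a where "a = \<lfloor>\<tau> / (X + Y) + \<delta>\<rfloor>"
    define b where "b = \<lfloor>\<tau> / X + \<delta>\<rfloor>"
    have sub: "\<kappa> ` ?N \<subseteq> {a..b}"
    proof
      fix k assume "k \<in> \<kappa> ` ?N"
      then obtain n where n: "X < of_int n" "of_int n \<le> X + Y" and k: "k = \<kappa> n" by auto
      have n0: "real_of_int n > 0" using n X0 by linarith
      have "\<tau> / (X + Y) \<le> \<tau> / of_int n" using n n0 tau0 by (intro divide_left_mono) auto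
      moreover have "\<tau> / of_int n \<le> \<tau> / X" using n n0 tau0 X0 by (intro divide_left_mono) auto
      ultimately show "k \<in> {a..b}" unfolding k \<kappa>_def a_def b_def by (auto intro: floor_mono)
    qed
    have "card (\<kappa> ` ?N) \<le> card {a..b}" using sub by (intro card_mono) auto
    then have c1: "real (card (\<kappa> ` ?N)) \<le> real (nat (b - a + 1))" by simp
    have fa: "real_of_int a > \<tau> / (X + Y) + \<delta> - 1" unfolding a_def by linarith
    have fb: "real_of_int b \<le> \<tau> / X + \<delta>" unfolding b_def by linarith
    have h: "\<tau> / (2 * X) \<le> \<tau> / (X + Y)" using YX X0 Y0 tau0 by (intro divide_left_mono) auto
    have "\<tau> / X = \<tau> / (2 * X) + \<tau> / (2 * X)" using X0 by (simp add: field_simps)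
    then have "real_of_int (b - a + 1) \<le> \<tau> / (2 * X) + 2" using fa fb h by simp
    moreover have "\<tau> / (2 * X) + 2 \<ge> 0" using tau0 X0 by simp
    moreover have "real (nat (b - a + 1)) \<le> max 0 (real_of_int (b - a + 1))" by (cases "b - a + 1 \<ge> 0") auto
    ultimately show "real (card (\<kappa> ` ?N)) \<le> \<tau> / (2 * X) + 2" using c1 by linarith
  qed
  also have "(\<tau> / (2 * X) + 2) * Bc = (r / (2 * u) + 2) * (2 * u + 2 + 8 * u / pi)"
  proof -
    have r0: "r > 0" and u0: "u > 0" using r10 u2 by auto
    have e1: "\<tau> / (2 * X) = r / (2 * u)" unfolding tr Xu by (rule e1_gen[OF r0 u0])
    have e2: "8 * \<delta> * X^2 / \<tau> = 2 * u" unfolding tr Xu du by (rule e2_gen[OF r0 u0])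
    have e3: "2 / (pi * \<delta>) = 8 * u / pi" unfolding du using u0 by simp
    show ?thesis unfolding Bc_def e1 e2 e3 ..
  qed
  also have "\<dots> \<le> (11/2) * r + 11 * u" by (rule numeric[OF r10 u2])
  finally show ?thesis unfolding u_def r_def \<tau>_def .
qed



theorem proposition18:
  fixes \<alpha> t :: real
  assumes "\<alpha> > 0" and "t > 2 * pi"
  defines "\<tau> \<equiv> t / (2 * pi)"
  defines "A \<equiv> 2 / sqrt pi * (1 + sqrt (1 + 3 * pi / 8))"
  shows "S (\<tau> powr \<alpha>) t \<le> 2 * A * (\<tau> powr (1/2) + 2 * \<tau> powr (\<alpha> - 1/2))"
proof -
  have t0: "t > 0" using assms(2) pi_gt_zero by linarith
  have tau1: "\<tau> > 1" unfolding \<tau>_def using assms(2) by simp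
  define X where "X = \<tau> powr \<alpha>"
  define r where "r = sqrt \<tau>"
  have X0: "X > 0" unfolding X_def using tau1 by simp
  have r1: "r > 1" unfolding r_def using tau1 by simp
  have h1: "\<tau> powr (1/2) = r" unfolding r_def using tau1 by (simp add: powr_half_sqrt)
  have h2: "\<tau> powr (\<alpha> - 1/2) = X / r" unfolding X_def using tau1 h1 by (simp add: powr_diff)
  have A1: "A \<ge> 11/4" unfolding A_def by (rule A_bound)
  have Xr0: "X / r \<ge> 0" using X0 r1 by simp
  have rhs: "(11/2) * r + 11 * (X / r) \<le> 2 * A * (r + 2 * (X / r))"
  proof -
    have "(11/2) * r + 11 * (X / r) = 2 * (11/4) * (r + 2 * (X / r))" by simp
    also have "\<dots> \<le> 2 * A * (r + 2 * (X / r))"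
      using A1 r1 Xr0 by (intro mult_right_mono mult_left_mono) auto
    finally show ?thesis .
  qed
  have bound: "norm (expsum t X Y) \<le> (11/2) * r + 11 * (X / r)" if Y: "Y \<in> {0<..X}" for Y
  proof (cases "\<tau> \<ge> 100 \<and> X \<ge> r / 2")
    case True
    then show ?thesis using main_bound[OF t0 _ X0 _ _, of Y] Y unfolding r_def \<tau>_def by auto
  next
    case False
    have "norm (expsum t X Y) \<le> Y + 1" using Y by (intro trivial_bound) auto
    also have "\<dots> \<le> X + 1" using Y by auto
    also have "\<dots> \<le> (11/2) * r + 11 * (X / r)"
    proof (cases "X < r / 2")
      case True
      then show ?thesis using r1 Xr0 by linarith
    next
      case False2: False
      with False have "\<tau> < 100" by auto
      then have "r < 10" unfolding r_def using real_sqrt_less_mono[of \<tau> 100] by simp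
      then have "X \<le> 11 * (X / r)" using X0 r1 by (simp add: field_simps)
      then show ?thesis using r1 by linarith
    qed
    finally show ?thesis .
  qed
  have "S X t \<le> (11/2) * r + 11 * (X / r)"
    unfolding S_def using X0 bound by (intro cSUP_least) auto
  then show ?thesis unfolding h1 h2 X_def[symmetric] using rhs by linarith
qed


end
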